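(* Let $\Omega$ be a finite set and $f:2^{\Omega}\to\mathbb{R}$ increasing with $f(\emptyset)=0$. Let $H_f=\mathrm{conv}\{(x(\mathcal{S}),z)\in\mathbb{R}^{|\Omega|}\times\mathbb{R}:\mathcal{S}\subseteq\Omega,\ f(\mathcal{S})\le z\}$. Suppose $\gamma\in\mathbb{R}^{|\Omega|}$, $\gamma_0\in\mathbb{R}$, and the inequality $\sum_{s\in\Omega}\gamma_sx_s\le z+|\Omega|D[f]+\gamma_0$ defines a nontrivial facet of $H_f$. Let $\bar f:2^{\Omega}\to\mathbb{R}$ be defined by $\bar f(\emptyset)=0$ and $\bar f(\mathcal{S})=f(\mathcal{S})+|\Omega|D[f]+\gamma_0$ for all nonempty $\mathcal{S}\subseteq\Omega$, and suppose $\gamma\in\Gamma(\bar f)$. Then $\gamma_0\le0$.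
   Context: $x(\mathcal{S})$ is the characteristic vector of $\mathcal{S}$. A facet is nontrivial if it is not defined by a variable bound inequality. For a set function $h$ and permutation $\pi$ of $\Omega$, $\mathcal{S}^\pi_0=\emptyset$, $\mathcal{S}^\pi_k=\{\pi_1,\dots,\pi_k\}$; $\Gamma(h)=\{\gamma\in\mathbb{R}^{|\Omega|}:\exists$ permutation $\pi$ with $\gamma_{\pi_i}=h(\mathcal{S}^\pi_i)-h(\mathcal{S}^\pi_{i-1})$ for all $i\}$. $D[f]=\max\{f(\mathcal{A}\cup\mathcal{B}\cup\{s\})-f(\mathcal{A}\cup\mathcal{B})-f(\mathcal{A}\cup\{s\})+f(\mathcal{A}):\mathcal{A},\mathcal{B}\subseteq\Omega,s\in\Omega,|\mathcal{A}|\le|\Omega|-1\}$. *)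

theory Defs
  imports "HOL-Analysis.Analysis"
begin

text \<open>Ground set Omega is the finite type 'n (Omega = UNIV); R^|Omega| is real^'n.\<close>

definition charvec :: "'n::finite set \<Rightarrow> real^'n" where
  "charvec S = (\<chi> i. if i \<in> S then 1 else 0)"

definition increasing_sf :: "('n::finite set \<Rightarrow> real) \<Rightarrow> bool" where
  "increasing_sf f \<longleftrightarrow> (\<forall>A B. A \<subseteq> B \<longrightarrow> f A \<le> f B)"

definition Hf :: "('n::finite set \<Rightarrow> real) \<Rightarrow> ((real^'n) \<times> real) set" where
  "Hf f = convex hull {(charvec S, z) | S z. f S \<le> z}"

definition Dsf :: "('n::finite set \<Rightarrow> real) \<Rightarrow> real" where
  "Dsf f = Max {f (A \<union> B \<union> {s}) - f (A \<union> B) - f (A \<union> {s}) + f A | A B s.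
                 card A \<le> CARD('n) - 1}"

text \<open>Gamma(h): permutation pi of Omega given as a distinct list enumerating Omega;
  S^pi_i = set (take i pi), and gamma_{pi_i} = h(S^pi_i) - h(S^pi_{i-1}).\<close>
definition Gamma :: "('n::finite set \<Rightarrow> real) \<Rightarrow> (real^'n) set" where
  "Gamma h = {\<gamma>. \<exists>ps. distinct ps \<and> set ps = UNIV \<and>
      (\<forall>i < length ps. \<gamma> $ (ps ! i) = h (set (take (Suc i) ps)) - h (set (take i ps)))}"

definition lin_x :: "real^'n::finite \<Rightarrow> real^'n \<Rightarrow> real" where
  "lin_x a x = (\<Sum>s\<in>UNIV. a $ s * x $ s)"

definition tight_face :: "((real^'n::finite) \<times> real) set \<Rightarrow> real^'n \<Rightarrow> real \<Rightarrow> ((real^'n) \<times> real) set" where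
  "tight_face H a c = {p \<in> H. lin_x a (fst p) = snd p + c}"

definition defines_facet :: "((real^'n::finite) \<times> real) set \<Rightarrow> real^'n \<Rightarrow> real \<Rightarrow> bool" where
  "defines_facet H a c \<longleftrightarrow>
     (\<forall>p\<in>H. lin_x a (fst p) \<le> snd p + c) \<and>
     aff_dim (tight_face H a c) = aff_dim H - 1"

text \<open>Nontrivial facet: not the face defined by a variable bound inequality
  x_s >= 0 or x_s <= 1.\<close>
definition defines_nontrivial_facet :: "((real^'n::finite) \<times> real) set \<Rightarrow> real^'n \<Rightarrow> real \<Rightarrow> bool" where
  "defines_nontrivial_facet H a c \<longleftrightarrow> defines_facet H a c \<and>
     (\<forall>s. tight_face H a c \<noteq> {p \<in> H. fst p $ s = 0} \<and>
          tight_face H a c \<noteq> {p \<in> H. fst p $ s = 1})"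

end

theory Submission
  imports Defs
begin

lemma lin_inner: "lin_x a x = a \<bullet> x"
  by (simp add: lin_x_def inner_vec_def)

lemma lin_charvec: "lin_x a (charvec S) = (\<Sum>i\<in>S. a $ i)"
proof -
  have "lin_x a (charvec S) = (\<Sum>i\<in>UNIV. if i \<in> S then a $ i else 0)"
    unfolding lin_x_def charvec_def by (intro sum.cong) auto
  also have "\<dots> = (\<Sum>i\<in>S. a $ i)"
    by (simp add: sum.If_cases)
  finally show ?thesis .
qed

lemma Dsf_ge:
  fixes f :: "'n::finite set \<Rightarrow> real"
  assumes "card A \<le> CARD('n) - 1"
  shows "f (A \<union> B \<union> {s}) - f (A \<union> B) - f (A \<union> {s}) + f A \<le> Dsf f"
proof -
  let ?M = "{f (A \<union> B \<union> {s}) - f (A \<union> B) - f (A \<union> {s}) + f A | A B s.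
                 card A \<le> CARD('n) - 1}"
  have "?M \<subseteq> (\<lambda>(A,B,s). f (A \<union> B \<union> {s}) - f (A \<union> B) - f (A \<union> {s}) + f A) ` UNIV"
  proof
    fix x assume "x \<in> ?M"
    then obtain A B s where "x = f (A \<union> B \<union> {s}) - f (A \<union> B) - f (A \<union> {s}) + f A" by blast
    thus "x \<in> (\<lambda>(A,B,s). f (A \<union> B \<union> {s}) - f (A \<union> B) - f (A \<union> {s}) + f A) ` UNIV"
      by (intro image_eqI[where x="(A,B,s)"]) auto
  qed
  hence fin: "finite ?M" by (rule finite_subset) simp
  show ?thesis unfolding Dsf_def
    by (rule Max_ge[OF fin]) (use assms in blast)
qed

theorem mainTheorem10:
  fixes f :: "'n::finite set \<Rightarrow> real" and \<gamma> :: "real^'n" and \<gamma>0 :: real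
  assumes "increasing_sf f" and "f {} = 0"
    and "defines_nontrivial_facet (Hf f) \<gamma> (real CARD('n) * Dsf f + \<gamma>0)"
    and "\<gamma> \<in> Gamma (\<lambda>S. if S = {} then 0 else f S + real CARD('n) * Dsf f + \<gamma>0)"
  shows "\<gamma>0 \<le> 0"
proof (rule ccontr)
  assume neg: "\<not> \<gamma>0 \<le> 0"
  define c where "c = real CARD('n) * Dsf f + \<gamma>0"
  define H where "H = Hf f"
  have cvx: "convex H" unfolding H_def Hf_def by (rule convex_convex_hull)
  have facet: "defines_nontrivial_facet H \<gamma> c" using assms(3) unfolding H_def c_def .
  have valid: "\<And>p. p \<in> H \<Longrightarrow> lin_x \<gamma> (fst p) \<le> snd p + c"
    using facet unfolding defines_nontrivial_facet_def defines_facet_def by blast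
  have gen: "\<And>S z. f S \<le> z \<Longrightarrow> (charvec S, z) \<in> H"
    unfolding H_def Hf_def by (rule hull_inc) blast
  have D0: "0 \<le> Dsf f"
    using Dsf_ge[where A="{}" and B="{}" and f=f and s=undefined] by simp
  have Db: "\<And>S s. f (S \<union> {s}) - f S - f {s} \<le> Dsf f"
    using Dsf_ge[where A="{}" and f=f] assms(2) by simp
  have n1: "1 \<le> real CARD('n)" by simp
  have "Dsf f \<le> real CARD('n) * Dsf f" using D0 n1 by (simp add: mult_le_cancel_right1)
  hence cD: "Dsf f < c" using neg unfolding c_def by linarith
  obtain ps where ps: "distinct ps" "set ps = UNIV"
    "\<And>i. i < length ps \<Longrightarrow> \<gamma> $ (ps ! i) = (\<lambda>S. if S = {} then 0 else f S + real CARD('n) * Dsf f + \<gamma>0) (set (take (Suc i) ps)) - (\<lambda>S. if S = {} then 0 else f S + real CARD('n) * Dsf f + \<gamma>0) (set (take i ps))"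
    using assms(4) unfolding Gamma_def by blast
  have lp: "0 < length ps" using ps(2) by (cases ps) auto
  define s where "s = ps ! 0"
  have "set (take 1 ps) = {s}" using lp unfolding s_def by (cases ps) auto
  hence gs: "\<gamma> $ s = f {s} + c" using ps(3)[OF lp] unfolding s_def c_def by simp
  define \<epsilon> where "\<epsilon> = c - Dsf f"
  have eps: "0 < \<epsilon>" using cD unfolding \<epsilon>_def by simp
  define a where "a = ((\<chi> i. \<gamma> $ i + (if i = s then - \<epsilon> else 0)), -1::real)"
  have a_inner: "\<And>p. a \<bullet> p = lin_x \<gamma> (fst p) - snd p - \<epsilon> * (fst p $ s)"
  proof -
    fix p :: "(real^'n) \<times> real"
    obtain x z where p: "p = (x, z)" by (cases p)
    have "(\<chi> i. \<gamma> $ i + (if i = s then - \<epsilon> else 0)) = \<gamma> + axis s (- \<epsilon>)"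
      by (vector axis_def)
    hence "a \<bullet> p = (\<gamma> + axis s (- \<epsilon>)) \<bullet> x - z" unfolding a_def p by simp
    also have "\<dots> = lin_x \<gamma> x - z - \<epsilon> * x $ s"
      by (simp add: inner_add_left lin_inner inner_axis')
    finally show "a \<bullet> p = lin_x \<gamma> (fst p) - snd p - \<epsilon> * (fst p $ s)" using p by simp
  qed
  have gen_ineq: "\<And>S z. f S \<le> z \<Longrightarrow> a \<bullet> (charvec S, z) \<le> c - \<epsilon>"
  proof -
    fix S z assume fz: "f S \<le> z"
    have cs: "charvec S $ s = (if s \<in> S then 1 else 0)" by (simp add: charvec_def)
    show "a \<bullet> (charvec S, z) \<le> c - \<epsilon>"
    proof (cases "s \<in> S")
      case True
      have "lin_x \<gamma> (charvec S) \<le> z + c" using valid[OF gen[OF fz]] by simp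
      thus ?thesis using True cs by (simp add: a_inner)
    next
      case False
      have "lin_x \<gamma> (charvec (S \<union> {s})) \<le> f (S \<union> {s}) + c"
        using valid[OF gen[of "S \<union> {s}" "f (S \<union> {s})"]] by simp
      moreover have "lin_x \<gamma> (charvec (S \<union> {s})) = lin_x \<gamma> (charvec S) + \<gamma> $ s"
        using False by (simp add: lin_charvec)
      ultimately have "lin_x \<gamma> (charvec S) \<le> f S + Dsf f"
        using gs Db[of S s] by linarith
      thus ?thesis using False cs fz unfolding \<epsilon>_def by (simp add: a_inner)
    qed
  qed
  have Hsub: "H \<subseteq> {p. a \<bullet> p \<le> c - \<epsilon>}"
    unfolding H_def Hf_def by (rule hull_minimal) (auto intro: gen_ineq convex_halfspace_le)
  define b where "b = (axis s (1::real), 0::real)"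
  have b_inner: "\<And>p. b \<bullet> p = fst p $ s"
    by (auto simp: b_def inner_axis')
  have gen_b: "\<And>S z. f S \<le> z \<Longrightarrow> b \<bullet> (charvec S, z) \<le> 1"
    by (simp add: b_inner charvec_def)
  have Hsubb: "H \<subseteq> {p. b \<bullet> p \<le> 1}"
    unfolding H_def Hf_def by (rule hull_minimal) (auto intro: gen_b convex_halfspace_le)
  define G where "G = {p \<in> H. fst p $ s = 1}"
  have G_eq: "G = H \<inter> {p. b \<bullet> p = 1}" unfolding G_def by (auto simp: b_inner)
  have Gface: "G face_of H" unfolding G_eq
    by (rule face_of_Int_supporting_hyperplane_le[OF cvx]) (use Hsubb in auto)
  define T where "T = tight_face H \<gamma> c"
  have T_eq: "T = H \<inter> {p. (\<gamma>, -1::real) \<bullet> p = c}"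
    unfolding T_def tight_face_def by (auto simp: lin_inner)
  have Tface: "T face_of H" unfolding T_eq
    by (rule face_of_Int_supporting_hyperplane_le[OF cvx]) (use valid in \<open>fastforce simp: lin_inner\<close>)
  have TG: "T \<subseteq> G"
  proof
    fix p assume pT: "p \<in> T"
    hence pH: "p \<in> H" and eq: "lin_x \<gamma> (fst p) = snd p + c"
      unfolding T_def tight_face_def by auto
    have "a \<bullet> p \<le> c - \<epsilon>" using Hsub pH by auto
    hence "fst p $ s \<ge> 1" using eq eps by (simp add: a_inner)
    moreover have "fst p $ s \<le> 1" using Hsubb pH b_inner by auto
    ultimately show "p \<in> G" using pH unfolding G_def by auto
  qed
  have GH: "G \<noteq> H"
  proof
    assume "G = H"
    moreover have "(charvec {}, f {}) \<in> H" by (rule gen) simp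
    ultimately have "(charvec {}, f {}) \<in> G" by simp
    thus False unfolding G_def by (simp add: charvec_def)
  qed
  have dG: "aff_dim G < aff_dim H" by (rule face_of_aff_dim_lt[OF cvx Gface GH])
  have TneG: "T \<noteq> G"
    using facet unfolding defines_nontrivial_facet_def T_def G_def by blast
  have cvG: "convex G" using G_eq cvx by (simp add: convex_Int convex_hyperplane)
  have "aff_dim T < aff_dim G"
    by (rule face_of_aff_dim_lt[OF cvG face_of_subset[OF Tface TG] TneG]) (use Gface face_of_imp_subset in auto)
  moreover have "aff_dim T = aff_dim H - 1"
    using facet unfolding defines_nontrivial_facet_def defines_facet_def T_def by blast
  ultimately show False using dG by linarith
qed

end
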